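(* Let $\mathbb F$ be a field. For $u,v\in\mathbb F$ let $\mathcal D(u,v)$ be the $2\times2\times2$ spatial matrix with horizontal slices \[ \mathcal D(u,v)=\left\|\begin{bmatrix}1&0\\0&1\end{bmatrix}\middle|\begin{bmatrix}0&v\\1&u\end{bmatrix}\right\|. \] Then $\mathcal D(u,v)$ is equivalent to $\mathcal D(u',v')$ ($u',v'\in\mathbb F$) if and only if there exist $a,b,c,d\in\mathbb F$ such that \[ ad-bc\ne0,\qquad a^2+uab-vb^2\ne0, \] and \[ u'=\frac{2ac+uad+ucb-2vbd}{a^2+uab-vb^2},\qquad v'=\frac{-c^2-ucd+vd^2}{a^2+uab-vb^2}. \]
   Context: An $m\times n\times q$ spatial matrix over $\mathbb F$ is an array $[a_{ijk}]$ ($1\le i\le m$, $1\le j\le n$, $1\le k\le q$) with entries in $\mathbb F$, written $\|A_1|\dots|A_q\|$ with horizontal slices $A_k=[a_{ijk}]_{ij}$. Two $m\times n\times q$ spatial matrices $[a_{ijk}]$ and $[b_{ijk}]$ are equivalent if there are nonsingular matrices $R=[r_{ii'}]$ ($m\times m$), $S=[s_{jj'}]$ ($n\times n$), $T=[t_{kk'}]$ ($q\times q$) with $b_{i'j'k'}=\sum_{i,j,k}a_{ijk}r_{ii'}s_{jj'}t_{kk'}$ for all $i',j',k'$. *)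

theory Defs
  imports "Jordan_Normal_Form.Matrix" "Jordan_Normal_Form.Determinant"
begin

text \<open>An m x n x q spatial matrix is represented by its entry function
  A i j k (indices 0-based, i < m, j < n, k < q); entries outside the range are irrelevant.
  The horizontal slice k is the m x n matrix of entries A i j k.\<close>

type_synonym 'a spatial = "nat \<Rightarrow> nat \<Rightarrow> nat \<Rightarrow> 'a"

definition spatial_equiv ::
  "nat \<Rightarrow> nat \<Rightarrow> nat \<Rightarrow> 'a::comm_ring_1 spatial \<Rightarrow> 'a spatial \<Rightarrow> bool" where
  "spatial_equiv m n q A B \<longleftrightarrow>
     (\<exists>R S T. R \<in> carrier_mat m m \<and> S \<in> carrier_mat n n \<and> T \<in> carrier_mat q q \<and>
        invertible_mat R \<and> invertible_mat S \<and> invertible_mat T \<and>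
        (\<forall>i'<m. \<forall>j'<n. \<forall>k'<q.
           B i' j' k' = (\<Sum>i<m. \<Sum>j<n. \<Sum>k<q. A i j k * R $$ (i, i') * S $$ (j, j') * T $$ (k, k'))))"

definition D :: "'a::field \<Rightarrow> 'a \<Rightarrow> 'a spatial" where
  "D u v i j k =
     (if i < 2 \<and> j < 2 \<and> k < 2 then
        (if k = 0 then (if i = j then 1 else 0)
         else (if i = 0 \<and> j = 0 then 0
               else if i = 0 \<and> j = 1 then v
               else if i = 1 \<and> j = 0 then 1
               else u))
      else 0)"

end

theory Submission
  imports Defs
begin

lemma all2: "(\<forall>i<(2::nat). P i) = (P 0 \<and> P 1)"
  by (auto simp: less_Suc_eq numeral_2_eq_2)

lemma sum2: "(\<Sum>i<(2::nat). f i) = f 0 + f 1"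
  by (simp add: numeral_2_eq_2)

definition E2 :: "'a::field \<Rightarrow> 'a \<Rightarrow> 'a \<Rightarrow> 'a \<Rightarrow> 'a \<Rightarrow> 'a \<Rightarrow> 'a \<Rightarrow> 'a \<Rightarrow> 'a" where
  "E2 xa xb xc xd ri0 ri1 sj0 sj1 = ri0*(xa*sj0 + xb*sj1) + ri1*(xc*sj0 + xd*sj1)"

definition EQS where
 "EQS u v u' v' r00 r01 r10 r11 s00 s01 s10 s11 a b c d \<longleftrightarrow>
   1 = E2 a (b*v) b (a+b*u) r00 r10 s00 s10 \<and>
   0 = E2 c (d*v) d (c+d*u) r00 r10 s00 s10 \<and>
   0 = E2 a (b*v) b (a+b*u) r00 r10 s01 s11 \<and>
   v' = E2 c (d*v) d (c+d*u) r00 r10 s01 s11 \<and>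
   0 = E2 a (b*v) b (a+b*u) r01 r11 s00 s10 \<and>
   1 = E2 c (d*v) d (c+d*u) r01 r11 s00 s10 \<and>
   1 = E2 a (b*v) b (a+b*u) r01 r11 s01 s11 \<and>
   u' = E2 c (d*v) d (c+d*u) r01 r11 s01 s11"

lemma bridge: "spatial_equiv 2 2 2 (D u v) (D u' v') \<longleftrightarrow> (\<exists>R S T. R \<in> carrier_mat 2 2 \<and> S \<in> carrier_mat 2 2 \<and> T \<in> carrier_mat 2 2 \<and>
        invertible_mat R \<and> invertible_mat S \<and> invertible_mat T \<and>
   EQS u v u' v' (R$$(0,0)) (R$$(0,1)) (R$$(1,0)) (R$$(1,1)) (S$$(0,0)) (S$$(0,1)) (S$$(1,0)) (S$$(1,1))
      (T$$(0,0)) (T$$(1,0)) (T$$(0,1)) (T$$(1,1)))"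
  unfolding spatial_equiv_def all2 sum2 EQS_def E2_def
  by (simp add: D_def algebra_simps One_nat_def)

lemma det_mult2:
  fixes xa xb xc xd ya yb yc yd :: "'a::comm_ring_1"
  shows "(xa*xd - xb*xc)*(ya*yd-yb*yc) = (xa*ya+xb*yc)*(xc*yb+xd*yd) - (xa*yb+xb*yd)*(xc*ya+xd*yc)"
  by (simp add: algebra_simps)

lemma adj_mult2:
  fixes pa pb pc pd wa wb wc wd :: "'a::comm_ring_1"
  assumes h: "pa*wa+pb*wc = 1" "pa*wb+pb*wd=0" "pc*wa+pd*wc=0" "pc*wb+pd*wd=1"
  shows "(pa*pd-pb*pc)*wa = pd \<and> (pa*pd-pb*pc)*wb = -pb \<and> (pa*pd-pb*pc)*wc = -pc \<and> (pa*pd-pb*pc)*wd = pa"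
proof -
  have "(pa*pd-pb*pc)*wa = pd*(pa*wa+pb*wc) - pb*(pc*wa+pd*wc)"
   "(pa*pd-pb*pc)*wb = pd*(pa*wb+pb*wd) - pb*(pc*wb+pd*wd)"
   "(pa*pd-pb*pc)*wc = pa*(pc*wa+pd*wc) - pc*(pa*wa+pb*wc)"
   "(pa*pd-pb*pc)*wd = pa*(pc*wb+pd*wd) - pc*(pa*wb+pb*wd)"
    by (simp_all add: algebra_simps)
  then show ?thesis using h by simp
qed

lemma inv_comm2:
  fixes ma mb mc md na nb nc nd :: "'a::field"
  assumes h: "ma*na+mb*nc = 1" "ma*nb+mb*nd=0" "mc*na+md*nc=0" "mc*nb+md*nd=1"
  shows "na*ma+nb*mc=1 \<and> na*mb+nb*md=0 \<and> nc*ma+nd*mc=0 \<and> nc*mb+nd*md=1"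
proof -
  define dl where "dl = ma*md-mb*mc"
  have "dl*(na*nd-nb*nc) = 1"
    using det_mult2[where xa=ma and xb=mb and xc=mc and xd=md and ya=na and yb=nb and yc=nc and yd=nd] h
    by (simp add: dl_def)
  then have nz: "dl \<noteq> 0" by auto
  have A: "dl*na = md" "dl*nb = -mb" "dl*nc = -mc" "dl*nd = ma"
    using adj_mult2[OF h] unfolding dl_def by auto
  have "dl*(na*ma+nb*mc) = (dl*na)*ma+(dl*nb)*mc"
    "dl*(na*mb+nb*md) = (dl*na)*mb+(dl*nb)*md"
    "dl*(nc*ma+nd*mc) = (dl*nc)*ma+(dl*nd)*mc"
    "dl*(nc*mb+nd*md) = (dl*nc)*mb+(dl*nd)*md"
    by (simp_all add: algebra_simps)
  then have "dl*(na*ma+nb*mc) = dl*1"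
    "dl*(na*mb+nb*md) = dl*0"
    "dl*(nc*ma+nd*mc) = dl*0"
    "dl*(nc*mb+nd*md) = dl*1"
    unfolding A by (simp_all add: algebra_simps dl_def)
  then show ?thesis using nz by (metis mult_left_cancel)
qed

lemma fwd:
  fixes u v u' v' r00 r01 r10 r11 s00 s01 s10 s11 a b c d :: "'a::field"
  assumes "EQS u v u' v' r00 r01 r10 r11 s00 s01 s10 s11 a b c d"
  shows "a^2 + u * a * b - v * b^2 \<noteq> 0 \<and>
       u' = (2 * a * c + u * a * d + u * c * b - 2 * v * b * d) / (a^2 + u * a * b - v * b^2) \<and>
       v' = (- (c^2) - u * c * d + v * d^2) / (a^2 + u * a * b - v * b^2)"
proof -
  define \<Delta> where "\<Delta> = a^2 + u * a * b - v * b^2"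
  note h = assms[unfolded EQS_def E2_def]
  have dX: "(r00*r11 - r10*r01)*\<Delta> = (r00*a+r10*b)*(r01*(b*v)+r11*(a+b*u)) - (r00*(b*v)+r10*(a+b*u))*(r01*a+r11*b)"
    unfolding \<Delta>_def by (simp add: algebra_simps power2_eq_square)
  have dR: "((r00*r11 - r10*r01)*\<Delta>)*(s00*s11-s01*s10) = 1"
    unfolding dX det_mult2 using h by (simp add: algebra_simps)
  then have dnz: "\<Delta> \<noteq> 0" by auto
  have NR: "(a*s00+b*v*s10)*r00+(a*s01+b*v*s11)*r01=1 \<and> (a*s00+b*v*s10)*r10+(a*s01+b*v*s11)*r11=0 \<and>
     (b*s00+(a+b*u)*s10)*r00+(b*s01+(a+b*u)*s11)*r01=0 \<and> (b*s00+(a+b*u)*s10)*r10+(b*s01+(a+b*u)*s11)*r11=1"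
    by (rule inv_comm2[where ma=r00 and mb=r10 and mc=r01 and md=r11 and na="a*s00+b*v*s10" and nb="a*s01+b*v*s11"
      and nc="b*s00+(a+b*u)*s10" and nd="b*s01+(a+b*u)*s11"]) (use h in \<open>simp_all add: algebra_simps\<close>)
  have e1: "a*(s00*r00+s01*r01)+(b*v)*(s10*r00+s11*r01) = (a*s00+b*v*s10)*r00+(a*s01+b*v*s11)*r01"
    "a*(s00*r10+s01*r11)+(b*v)*(s10*r10+s11*r11) = (a*s00+b*v*s10)*r10+(a*s01+b*v*s11)*r11"
    "b*(s00*r00+s01*r01)+(a+b*u)*(s10*r00+s11*r01) = (b*s00+(a+b*u)*s10)*r00+(b*s01+(a+b*u)*s11)*r01"
    "b*(s00*r10+s01*r11)+(a+b*u)*(s10*r10+s11*r11) = (b*s00+(a+b*u)*s10)*r10+(b*s01+(a+b*u)*s11)*r11"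
    by (simp_all add: algebra_simps)
  have W0: "(a*(a+b*u)-(b*v)*b)*(s00*r00+s01*r01) = a+b*u \<and> (a*(a+b*u)-(b*v)*b)*(s00*r10+s01*r11) = -(b*v) \<and>
     (a*(a+b*u)-(b*v)*b)*(s10*r00+s11*r01) = -b \<and> (a*(a+b*u)-(b*v)*b)*(s10*r10+s11*r11) = a"
    by (rule adj_mult2) (use NR in \<open>simp_all only: e1\<close>)
  have dd: "a*(a+b*u)-(b*v)*b = \<Delta>" unfolding \<Delta>_def by (simp add: algebra_simps power2_eq_square)
  have W: "\<Delta>*(s00*r00+s01*r01) = a+b*u" "\<Delta>*(s00*r10+s01*r11) = -(b*v)" "\<Delta>*(s10*r00+s11*r01) = -b" "\<Delta>*(s10*r10+s11*r11) = a"
    using W0 unfolding dd by auto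
  have tr: "u' = c*(s00*r00+s01*r01) + d*v*(s10*r00+s11*r01) + d*(s00*r10+s01*r11) + (c+d*u)*(s10*r10+s11*r11)"
    using h by (simp add: algebra_simps)
  have uu: "u'*\<Delta> = 2 * a * c + u * a * d + u * c * b - 2 * v * b * d"
  proof -
    have "u'*\<Delta> = c*(\<Delta>*(s00*r00+s01*r01)) + d*v*(\<Delta>*(s10*r00+s11*r01)) + d*(\<Delta>*(s00*r10+s01*r11)) + (c+d*u)*(\<Delta>*(s10*r10+s11*r11))"
      unfolding tr by (simp add: algebra_simps)
    then show ?thesis unfolding W by (simp add: algebra_simps)
  qed
  define z00 where "z00 = r00*c + r10*d"
  define z01 where "z01 = r00*(d*v) + r10*(c+d*u)"
  define z10 where "z10 = r01*c + r11*d"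
  define z11 where "z11 = r01*(d*v) + r11*(c+d*u)"
  have zs: "z00*s00+z01*s10 = 0" "z00*s01+z01*s11 = v'" "z10*s00+z11*s10 = 1" "z10*s01+z11*s11 = u'"
    using h unfolding z00_def z01_def z10_def z11_def by (simp_all add: algebra_simps)
  have "(z00*z11 - z01*z10)*(s00*s11-s01*s10) = - v'"
    using det_mult2[where xa=z00 and xb=z01 and xc=z10 and xd=z11 and ya=s00 and yb=s01 and yc=s10 and yd=s11]
    unfolding zs by simp
  moreover have "z00*z11 - z01*z10 = (r00*r11 - r10*r01)*(c*(c+d*u) - (d*v)*d)"
    unfolding z00_def z01_def z10_def z11_def by (simp add: algebra_simps)
  ultimately have K: "(r00*r11 - r10*r01)*(c*(c+d*u) - (d*v)*d)*(s00*s11-s01*s10) = - v'" by simp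
  define dr where "dr = r00*r11 - r10*r01"
  define dq where "dq = c*(c+d*u) - (d*v)*d"
  define ds where "ds = s00*s11-s01*s10"
  have K': "dr*dq*ds = - v'" using K unfolding dr_def dq_def ds_def .
  have dR': "(dr*\<Delta>)*ds = 1" using dR unfolding dr_def ds_def .
  have "v'*\<Delta> = - dq * ((dr*\<Delta>)*ds)"
  proof -
    have "v'*\<Delta> = -(dr*dq*ds)*\<Delta>" using K' by simp
    also have "\<dots> = - dq * ((dr*\<Delta>)*ds)" by (simp add: ac_simps)
    finally show ?thesis .
  qed
  then have "v'*\<Delta> = - dq" using dR' by simp
  then have vv: "v'*\<Delta> = - (c^2) - u * c * d + v * d^2"
    unfolding dq_def by (simp add: algebra_simps power2_eq_square)
  have "u' = (2 * a * c + u * a * d + u * c * b - 2 * v * b * d) / \<Delta>"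
    using uu dnz by (simp add: eq_divide_eq)
  moreover have "v' = (- (c^2) - u * c * d + v * d^2) / \<Delta>"
    using vv dnz by (simp add: eq_divide_eq)
  ultimately show ?thesis using dnz unfolding \<Delta>_def by simp
qed

lemma inv2_iff:
  fixes X :: "'a::field mat"
  assumes X: "X \<in> carrier_mat 2 2"
  shows "invertible_mat X \<longleftrightarrow> X$$(0,0)*X$$(1,1) - X$$(0,1)*X$$(1,0) \<noteq> 0"
proof
  assume "invertible_mat X"
  then obtain B where XB: "X * B = 1\<^sub>m 2" and BX: "B * X = 1\<^sub>m (dim_row B)"
    using X unfolding invertible_mat_def inverts_mat_def by auto
  have cB: "dim_col B = 2" using XB by (metis index_mult_mat(3) index_one_mat(3))
  have rB: "dim_row B = 2" using BX X by (metis carrier_matD(2) index_mult_mat(3) index_one_mat(3))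
  have e: "(X*B)$$(i,j) = X$$(i,0)*B$$(0,j) + X$$(i,1)*B$$(1,j)" if "i<2" "j<2" for i j
    using that X cB rB by (simp add: scalar_prod_def numeral_2_eq_2)
  have "(X*B)$$(0,0) = 1" "(X*B)$$(0,1) = 0" "(X*B)$$(1,0) = 0" "(X*B)$$(1,1) = 1"
    using XB by auto
  then have "(X$$(0,0)*X$$(1,1) - X$$(0,1)*X$$(1,0)) * (B$$(0,0)*B$$(1,1) - B$$(0,1)*B$$(1,0)) = 1"
    using e[of 0 0] e[of 0 1] e[of 1 0] e[of 1 1]
      det_mult2[where xa="X$$(0,0)" and xb="X$$(0,1)" and xc="X$$(1,0)" and xd="X$$(1,1)" and ya="B$$(0,0)" and yb="B$$(0,1)" and yc="B$$(1,0)" and yd="B$$(1,1)"]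
    by simp
  then show "X$$(0,0)*X$$(1,1) - X$$(0,1)*X$$(1,0) \<noteq> 0" by auto
next
  assume nz: "X$$(0,0)*X$$(1,1) - X$$(0,1)*X$$(1,0) \<noteq> 0"
  define dt where "dt = X$$(0,0)*X$$(1,1) - X$$(0,1)*X$$(1,0)"
  define B where "B = mat 2 2 (\<lambda>(i,j). if i = 0 \<and> j = 0 then X$$(1,1)/dt else if i = 0 \<and> j = 1 then - X$$(0,1)/dt
     else if i = 1 \<and> j = 0 then - X$$(1,0)/dt else X$$(0,0)/dt)"
  have dtnz: "dt \<noteq> 0" using nz dt_def by simp
  have B: "B \<in> carrier_mat 2 2" unfolding B_def by simp
  have e: "(Y*Z)$$(i,j) = Y$$(i,0)*Z$$(0,j) + Y$$(i,1)*Z$$(1,j)" if "i<2" "j<2"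
     "Y \<in> carrier_mat 2 2" "Z \<in> carrier_mat 2 2" for i j and Y Z :: "'a mat"
    using that by (simp add: scalar_prod_def numeral_2_eq_2)
  have Bv: "B$$(0,0) = X$$(1,1)/dt" "B$$(0,1) = - X$$(0,1)/dt" "B$$(1,0) = - X$$(1,0)/dt" "B$$(1,1) = X$$(0,0)/dt"
    unfolding B_def by auto
  note Bv' = Bv[unfolded One_nat_def]
  have "X * B = 1\<^sub>m 2"
  proof (rule eq_matI)
    fix i j assume "i < dim_row (1\<^sub>m 2 :: 'a mat)" "j < dim_col (1\<^sub>m 2 :: 'a mat)"
    then have ij: "i < 2" "j < 2" by auto
    show "(X * B) $$ (i, j) = 1\<^sub>m 2 $$ (i, j)"
      using ij e[OF ij X B] dtnz
      by (auto simp: less_Suc_eq numeral_2_eq_2 Bv' field_simps One_nat_def) (auto simp: dt_def algebra_simps One_nat_def)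
  qed (use X B in auto)
  moreover have "B * X = 1\<^sub>m 2"
  proof (rule eq_matI)
    fix i j assume "i < dim_row (1\<^sub>m 2 :: 'a mat)" "j < dim_col (1\<^sub>m 2 :: 'a mat)"
    then have ij: "i < 2" "j < 2" by auto
    show "(B * X) $$ (i, j) = 1\<^sub>m 2 $$ (i, j)"
      using ij e[OF ij B X] dtnz
      by (auto simp: less_Suc_eq numeral_2_eq_2 Bv' field_simps One_nat_def) (auto simp: dt_def algebra_simps One_nat_def)
  qed (use X B in auto)
  ultimately show "invertible_mat X" using X B
    unfolding invertible_mat_def inverts_mat_def square_mat.simps by auto
qed

definition mat2 :: "'a \<Rightarrow> 'a \<Rightarrow> 'a \<Rightarrow> 'a \<Rightarrow> 'a mat" where
  "mat2 xa xb xc xd = mat 2 2 (\<lambda>(i,j). if i = 0 then (if j = 0 then xa else xb) else (if j = 0 then xc else xd))"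

lemma mat2_simps: "mat2 xa xb xc xd \<in> carrier_mat 2 2"
  "mat2 xa xb xc xd $$ (0,0) = xa" "mat2 xa xb xc xd $$ (0,1) = xb"
  "mat2 xa xb xc xd $$ (1,0) = xc" "mat2 xa xb xc xd $$ (1,1) = xd"
  unfolding mat2_def by auto

lemma bwd_eqs:
  fixes u v a b c d w :: "'a::field"
  assumes hw: "w*((a * d - b * c)*(a^2 + u * a * b - v * b^2)) = 1"
  shows "EQS u v ((2 * a * c + u * a * d + u * c * b - 2 * v * b * d) / (a^2 + u * a * b - v * b^2))
     ((- (c^2) - u * c * d + v * d^2) / (a^2 + u * a * b - v * b^2))
     d (-b) (-c) a ((a^2 + u * a * b - v * b^2)*w) ((a*c+b*c*u-b*d*v)*w) 0
     ((a * d - b * c)*w) a b c d"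
proof -
  define dl where "dl = a * d - b * c"
  define De where "De = a^2 + u * a * b - v * b^2"
  define Nu where "Nu = 2 * a * c + u * a * d + u * c * b - 2 * v * b * d"
  define Nv where "Nv = - (c^2) - u * c * d + v * d^2"
  have hw': "w*(dl*De) = 1" using hw unfolding dl_def De_def .
  have nz: "De \<noteq> 0" "dl \<noteq> 0" using hw' by auto
  have U: "Nu / De = w*(Nu*dl)" using hw' nz by (simp add: field_simps)
  have V: "Nv / De = w*(Nv*dl)" using hw' nz by (simp add: field_simps)
  let ?K = "a*c+b*c*u-b*d*v"
  have e1: "E2 a (b*v) b (a+b*u) d (-c) (De*w) 0 = w*(dl*De)"
    "E2 c (d*v) d (c+d*u) d (-c) (De*w) 0 = w*0"
    "E2 a (b*v) b (a+b*u) d (-c) (?K*w) (dl*w) = w*0"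
    "E2 c (d*v) d (c+d*u) d (-c) (?K*w) (dl*w) = w*(Nv*dl)"
    "E2 a (b*v) b (a+b*u) (-b) a (De*w) 0 = w*0"
    "E2 c (d*v) d (c+d*u) (-b) a (De*w) 0 = w*(dl*De)"
    "E2 a (b*v) b (a+b*u) (-b) a (?K*w) (dl*w) = w*(dl*De)"
    "E2 c (d*v) d (c+d*u) (-b) a (?K*w) (dl*w) = w*(Nu*dl)"
    unfolding E2_def dl_def De_def Nu_def Nv_def by (simp_all add: algebra_simps power2_eq_square)
  show ?thesis
    unfolding EQS_def De_def[symmetric] dl_def[symmetric] Nu_def[symmetric] Nv_def[symmetric] U V e1 hw'
    by simp
qed

theorem lemma3:
  fixes u v u' v' :: "'a::field"
  shows "spatial_equiv 2 2 2 (D u v) (D u' v') \<longleftrightarrow>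
    (\<exists>a b c d :: 'a.
       a * d - b * c \<noteq> 0 \<and> a^2 + u * a * b - v * b^2 \<noteq> 0 \<and>
       u' = (2 * a * c + u * a * d + u * c * b - 2 * v * b * d) / (a^2 + u * a * b - v * b^2) \<and>
       v' = (- (c^2) - u * c * d + v * d^2) / (a^2 + u * a * b - v * b^2))"
proof
  assume "spatial_equiv 2 2 2 (D u v) (D u' v')"
  then obtain R S T where T: "T \<in> carrier_mat 2 2" "invertible_mat T" and
    E: "EQS u v u' v' (R$$(0,0)) (R$$(0,1)) (R$$(1,0)) (R$$(1,1)) (S$$(0,0)) (S$$(0,1)) (S$$(1,0)) (S$$(1,1))
      (T$$(0,0)) (T$$(1,0)) (T$$(0,1)) (T$$(1,1))"
    unfolding bridge by blast
  have "T$$(0,0)*T$$(1,1) - T$$(0,1)*T$$(1,0) \<noteq> 0" using inv2_iff[OF T(1)] T(2) by simp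
  then have "T$$(0,0)*T$$(1,1) - T$$(1,0)*T$$(0,1) \<noteq> 0" by (simp add: mult.commute)
  with fwd[OF E] show "\<exists>a b c d :: 'a.
       a * d - b * c \<noteq> 0 \<and> a^2 + u * a * b - v * b^2 \<noteq> 0 \<and>
       u' = (2 * a * c + u * a * d + u * c * b - 2 * v * b * d) / (a^2 + u * a * b - v * b^2) \<and>
       v' = (- (c^2) - u * c * d + v * d^2) / (a^2 + u * a * b - v * b^2)" by blast
next
  assume "\<exists>a b c d :: 'a.
       a * d - b * c \<noteq> 0 \<and> a^2 + u * a * b - v * b^2 \<noteq> 0 \<and>
       u' = (2 * a * c + u * a * d + u * c * b - 2 * v * b * d) / (a^2 + u * a * b - v * b^2) \<and>
       v' = (- (c^2) - u * c * d + v * d^2) / (a^2 + u * a * b - v * b^2)"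
  then obtain a b c d :: 'a where dl: "a * d - b * c \<noteq> 0" and De: "a^2 + u * a * b - v * b^2 \<noteq> 0" and
    uu: "u' = (2 * a * c + u * a * d + u * c * b - 2 * v * b * d) / (a^2 + u * a * b - v * b^2)" and
    vv: "v' = (- (c^2) - u * c * d + v * d^2) / (a^2 + u * a * b - v * b^2)" by blast
  define w where "w = 1 / ((a * d - b * c)*(a^2 + u * a * b - v * b^2))"
  have hw: "w*((a * d - b * c)*(a^2 + u * a * b - v * b^2)) = 1" unfolding w_def using dl De by simp
  have wnz: "w \<noteq> 0" using hw by auto
  define R where "R = mat2 d (-b) (-c) a"
  define S where "S = mat2 ((a^2 + u * a * b - v * b^2)*w) ((a*c+b*c*u-b*d*v)*w) 0 ((a * d - b * c)*w)"
  define T where "T = mat2 a c b d"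
  have RST: "R \<in> carrier_mat 2 2" "S \<in> carrier_mat 2 2" "T \<in> carrier_mat 2 2"
    unfolding R_def S_def T_def by (simp_all add: mat2_simps)
  have "invertible_mat R" unfolding inv2_iff[OF RST(1)] unfolding R_def mat2_simps using dl
    by (simp add: algebra_simps)
  moreover have "invertible_mat S" unfolding inv2_iff[OF RST(2)] unfolding S_def mat2_simps using dl De wnz
    by simp
  moreover have "invertible_mat T" unfolding inv2_iff[OF RST(3)] unfolding T_def mat2_simps using dl
    by (simp add: algebra_simps)
  moreover have "EQS u v u' v' (R$$(0,0)) (R$$(0,1)) (R$$(1,0)) (R$$(1,1)) (S$$(0,0)) (S$$(0,1)) (S$$(1,0)) (S$$(1,1))
      (T$$(0,0)) (T$$(1,0)) (T$$(0,1)) (T$$(1,1))"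
    unfolding R_def S_def T_def mat2_simps uu vv by (rule bwd_eqs[OF hw])
  ultimately show "spatial_equiv 2 2 2 (D u v) (D u' v')" unfolding bridge using RST by blast
qed

end
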